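(* Let $M$ be a large positive parameter and let $\mathcal{X}$ be any subset of $\{1,2,\ldots,10^M\}$. For a large positive parameter $N$, let $\mathcal{J}(N)$ denote the number of solutions $(x,y,p)$ of $$x\equiv y \pmod p;\qquad x,y\in\mathcal{X},\quad p\le N,\ p \text{ prime}.$$ Then $$\mathcal{J}(N)=\pi(N)\,|\mathcal{X}|+O\!\left(\frac{|\mathcal{X}|^2 M}{\log M}\right),$$ where the implied constant is absolute.
   Context: $\pi(N)$ denotes the number of primes $p\le N$. *)

theory Defs
  imports "HOL-Number_Theory.Number_Theory"
begin

definition primepi :: "real \<Rightarrow> nat" where
  "primepi N = card {p::nat. prime p \<and> real p \<le> N}"

definition Jcount :: "nat set \<Rightarrow> real \<Rightarrow> nat" where
  "Jcount X N = card {(x, y, p). x \<in> X \<and> y \<in> X \<and> prime p \<and> real p \<le> N \<and> [x = y] (mod p)}"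

end

theory Submission
  imports Defs
begin

lemma prod_primes_dvd:
  fixes d :: nat
  assumes "finite P" "\<And>p. p \<in> P \<Longrightarrow> prime p \<and> p dvd d"
  shows "\<Prod>P dvd d"
  using assms
proof (induction P rule: finite_induct)
  case empty then show ?case by simp
next
  case (insert p P)
  have cp: "coprime p (\<Prod>P)"
  proof (rule prime_imp_coprime)
    show "prime p" using insert by auto
    show "\<not> p dvd \<Prod>P"
    proof
      assume "p dvd \<Prod>P"
      then obtain q where "q \<in> P" "p dvd q" using insert prime_dvd_prod_iff[of P p id] by auto
      then have "p = q" using insert by (metis primes_dvd_imp_eq insert_iff)
      then show False using insert \<open>q \<in> P\<close> by auto
    qed
  qed
  have "\<Prod>P dvd d" using insert by auto
  moreover have "p dvd d" using insert by auto
  ultimately show ?case using cp insert by (simp add: divides_mult)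
qed
lemma omega_bound:
  fixes d :: nat and M :: real
  assumes d1: "1 \<le> d" and dM: "real d \<le> 10 powr M" and M2: "M \<ge> 2"
  shows "real (card {p. prime p \<and> p dvd d}) \<le> 20 * M / ln M"
proof -
  define P where "P = {p. prime p \<and> p dvd d}"
  define s where "s = sqrt M"
  have fin: "finite P" unfolding P_def
    by (rule finite_subset[of _ "{..d}"]) (use d1 in \<open>auto dest: dvd_imp_le\<close>)
  define P1 where "P1 = {p\<in>P. real p \<le> s}"
  define P2 where "P2 = {p\<in>P. real p > s}"
  have PU: "P = P1 \<union> P2" "P1 \<inter> P2 = {}" unfolding P1_def P2_def by auto
  have fin1: "finite P1" "finite P2" using fin unfolding P1_def P2_def by auto
  have lnM: "ln M > 0" using M2 by simp
  have s1: "s > 1" unfolding s_def using M2 by simp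
  have c1: "real (card P1) \<le> s"
  proof -
    have "P1 \<subseteq> {1..nat \<lfloor>s\<rfloor>}" unfolding P1_def P_def
      by (auto simp: le_nat_floor intro: le_nat_floor dest: prime_gt_0_nat)
    then have "card P1 \<le> nat \<lfloor>s\<rfloor>" by (metis card_atLeastAtMost card_mono finite_atLeastAtMost diff_Suc_1)
    then show ?thesis using s1 by linarith
  qed
  have c2: "real (card P2) * (ln M / 2) \<le> M * ln 10"
  proof -
    have "\<Prod>P2 dvd d" by (rule prod_primes_dvd) (use fin1 in \<open>auto simp: P2_def P_def\<close>)
    then have "\<Prod>P2 \<le> d" using d1 by (simp add: dvd_imp_le)
    have "s ^ card P2 = (\<Prod>p\<in>P2. s)" by simp
    also have "\<dots> \<le> (\<Prod>p\<in>P2. real p)"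
      by (rule prod_mono) (use s1 in \<open>auto simp: P2_def\<close>)
    also have "\<dots> \<le> real d" using \<open>\<Prod>P2 \<le> d\<close> unfolding of_nat_prod[symmetric] by (simp only: of_nat_le_iff)
    also have "\<dots> \<le> 10 powr M" by (rule dM)
    finally have "s ^ card P2 \<le> 10 powr M" .
    then have "ln (s ^ card P2) \<le> ln (10 powr M)" using s1 by (subst ln_le_cancel_iff) auto
    moreover have "ln (s ^ card P2) = real (card P2) * (ln M / 2)"
      using M2 s1 by (simp add: ln_realpow s_def ln_sqrt)
    moreover have "ln (10 powr M) = M * ln 10" by (simp add: ln_powr)
    ultimately show ?thesis by simp
  qed
  have l10: "ln (10::real) \<le> 9" using ln_le_minus_one[of 10] by simp
  have c2': "real (card P2) \<le> 18 * M / ln M"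
  proof -
    have "real (card P2) * (ln M / 2) \<le> M * 9" using c2 mult_left_mono[OF l10, of M] M2 by linarith
    then have "real (card P2) * ln M \<le> 18 * M" by simp
    then show ?thesis using lnM by (simp add: field_simps)
  qed
  have c1': "s \<le> 2 * M / ln M"
  proof -
    have "ln s \<le> s - 1" using s1 by (intro ln_le_minus_one) simp
    moreover have "ln s = ln M / 2" using M2 by (simp add: s_def ln_sqrt)
    ultimately have "ln M \<le> 2 * s" by simp
    then have "s * ln M \<le> s * (2 * s)" using s1 by (intro mult_left_mono) auto
    then have "s * ln M \<le> 2 * (s * s)" by (simp add: algebra_simps)
    moreover have "s * s = M" using M2 by (simp add: s_def)
    ultimately have "s * ln M \<le> 2 * M" by simp
    then show ?thesis using lnM by (simp add: field_simps)
  qed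
  have "card P = card P1 + card P2" using PU fin1 by (simp add: card_Un_disjoint)
  then have "real (card P) \<le> 2 * M / ln M + 18 * M / ln M" using c1 c1' c2' by simp
  also have "\<dots> = 20 * M / ln M" by (simp add: field_simps)
  finally show ?thesis unfolding P_def .
qed

lemma nat_le_ceil: "real (x::nat) \<le> r \<Longrightarrow> x \<le> nat \<lceil>r\<rceil>"
proof -
  assume "real x \<le> r"
  then have "\<lceil>real x\<rceil> \<le> \<lceil>r\<rceil>" by (rule ceiling_mono)
  then have "int x \<le> \<lceil>r\<rceil>" by simp
  then show ?thesis by linarith
qed

lemma cong_nat_dvd_dist:
  fixes x y p :: nat
  assumes "[x = y] (mod p)" "x \<noteq> y"
  shows "p dvd nat \<bar>int x - int y\<bar> \<and> 1 \<le> nat \<bar>int x - int y\<bar> \<and> nat \<bar>int x - int y\<bar> \<le> max x y"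
proof -
  have "[int x = int y] (mod int p)" using assms(1) by (simp add: cong_int_iff)
  then have "int p dvd int x - int y" by (simp add: cong_iff_dvd_diff)
  then have "int p dvd \<bar>int x - int y\<bar>" by simp
  then have "p dvd nat \<bar>int x - int y\<bar>"
    by (metis abs_ge_zero int_nat_eq int_dvd_int_iff)
  then show ?thesis using assms(2) by auto
qed

theorem theorem1:
  shows "\<exists>C::real. \<exists>M0::real. \<exists>N0::real. \<forall>M N. \<forall>X::nat set.
           M \<ge> M0 \<longrightarrow> N \<ge> N0 \<longrightarrow> X \<subseteq> {x. 1 \<le> x \<and> real x \<le> 10 powr M} \<longrightarrow>
           \<bar>real (Jcount X N) - real (primepi N) * real (card X)\<bar>
             \<le> C * real (card X) ^ 2 * M / ln M"
proof (intro exI allI impI)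
  fix M N :: real and X :: "nat set"
  assume M2: "2 \<le> M" and "0 \<le> N" and XS: "X \<subseteq> {x. 1 \<le> x \<and> real x \<le> 10 powr M}"
  define B where "B = 20 * M / ln M"
  have lnM: "ln M > 0" using M2 by simp
  have finX: "finite X"
  proof (rule finite_subset[of _ "{..nat \<lceil>10 powr M\<rceil>}"])
    show "X \<subseteq> {..nat \<lceil>10 powr M\<rceil>}" using XS by (auto intro: nat_le_ceil)
  qed simp
  define Pr where "Pr = {p::nat. prime p \<and> real p \<le> N}"
  have finPr: "finite Pr"
    by (rule finite_subset[of _ "{..nat \<lceil>N\<rceil>}"]) (auto simp: Pr_def intro: nat_le_ceil)
  define S where "S = {(x, y, p). x \<in> X \<and> y \<in> X \<and> prime p \<and> real p \<le> N \<and> [x = y] (mod p)}"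
  define D where "D = (\<lambda>(x, p). (x, x, p)) ` (X \<times> Pr)"
  define Off where "Off = {(x, y, p). x \<in> X \<and> y \<in> X \<and> x \<noteq> y \<and> prime p \<and> real p \<le> N \<and> [x = y] (mod p)}"
  have SDO: "S = D \<union> Off" "D \<inter> Off = {}" unfolding S_def D_def Off_def Pr_def by auto
  have finS: "finite S" unfolding S_def
    by (rule finite_subset[of _ "X \<times> X \<times> Pr"]) (use finX finPr in \<open>auto simp: Pr_def\<close>)
  have cD: "card D = card X * card Pr" unfolding D_def
    by (subst card_image) (auto simp: inj_on_def card_cartesian_product)
  define Q where "Q = (\<lambda>(x::nat, y::nat). {p. prime p \<and> real p \<le> N \<and> [x = y] (mod p)})"
  define I where "I = {(x, y). x \<in> X \<and> y \<in> X \<and> x \<noteq> y}"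
  have finI: "finite I" unfolding I_def
    by (rule finite_subset[of _ "X \<times> X"]) (auto simp: finX)
  have OffU: "Off = (\<Union>i\<in>I. (\<lambda>p. (fst i, snd i, p)) ` Q i)" 
  proof (rule Set.set_eqI)
    fix t :: "nat \<times> nat \<times> nat"
    obtain x y p where t: "t = (x, y, p)" by (cases t) auto
    show "t \<in> Off \<longleftrightarrow> t \<in> (\<Union>i\<in>I. (\<lambda>p. (fst i, snd i, p)) ` Q i)"
    proof
      assume "t \<in> Off"
      then have "(x, y) \<in> I" "p \<in> Q (x, y)" using t by (auto simp: Off_def I_def Q_def)
      then show "t \<in> (\<Union>i\<in>I. (\<lambda>p. (fst i, snd i, p)) ` Q i)" using t by force
    next
      assume "t \<in> (\<Union>i\<in>I. (\<lambda>p. (fst i, snd i, p)) ` Q i)"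
      then obtain i q where "i \<in> I" "q \<in> Q i" "t = (fst i, snd i, q)" by blast
      then show "t \<in> Off" by (cases i) (auto simp: Off_def I_def Q_def)
    qed
  qed
  have cQ: "real (card (Q i)) \<le> B" if iI: "i \<in> I" for i
  proof -
    obtain x y where i: "i = (x, y)" "x \<in> X" "y \<in> X" "x \<noteq> y" using iI unfolding I_def by auto
    define d where "d = nat \<bar>int x - int y\<bar>"
    have d1: "1 \<le> d" "d \<le> max x y" using i by (auto simp: d_def)
    have "real x \<le> 10 powr M" "real y \<le> 10 powr M" using XS i by auto
    then have "real d \<le> 10 powr M" using d1(2) by (cases "x \<le> y") (auto simp: max_def)
    then have om: "real (card {p. prime p \<and> p dvd d}) \<le> B" unfolding B_def using d1 M2 by (intro omega_bound) auto
    have sub: "Q i \<subseteq> {p. prime p \<and> p dvd d}"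
      using cong_nat_dvd_dist[of x y] i by (auto simp: Q_def d_def)
    have "finite {p. prime p \<and> p dvd d}"
      by (rule finite_subset[of _ "{..d}"]) (use d1 in \<open>auto dest: dvd_imp_le\<close>)
    then have "card (Q i) \<le> card {p. prime p \<and> p dvd d}" using sub by (rule card_mono)
    then show ?thesis using om by linarith
  qed
  have "card Off \<le> (\<Sum>i\<in>I. card ((\<lambda>p. (fst i, snd i, p)) ` Q i))" unfolding OffU by (rule card_UN_le[OF finI])
  also have "\<dots> = (\<Sum>i\<in>I. card (Q i))" by (intro sum.cong refl card_image) (auto simp: inj_on_def)
  finally have "real (card Off) \<le> (\<Sum>i\<in>I. real (card (Q i)))" unfolding of_nat_sum[symmetric] by (simp only: of_nat_le_iff)
  also have "\<dots> \<le> (\<Sum>i\<in>I. B)" using cQ by (rule sum_mono)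
  also have "\<dots> = real (card I) * B" by simp
  also have "\<dots> \<le> real (card X) ^ 2 * B"
  proof (rule mult_right_mono)
    have "card I \<le> card (X \<times> X)" by (rule card_mono) (auto simp: I_def finX)
    then have "card I \<le> card X * card X" by (simp add: card_cartesian_product)
    then have "real (card I) \<le> real (card X * card X)" by (simp only: of_nat_le_iff)
    then show "real (card I) \<le> real (card X) ^ 2" by (simp add: power2_eq_square)
    show "0 \<le> B" using lnM M2 by (simp add: B_def)
  qed
  finally have cO: "real (card Off) \<le> real (card X) ^ 2 * B" .
  have "Jcount X N = card S" unfolding Jcount_def S_def by simp
  also have "\<dots> = card D + card Off" using SDO finS by (simp add: card_Un_disjoint)
  finally have "real (Jcount X N) - real (primepi N) * real (card X) = real (card Off)"
    using cD by (simp add: primepi_def Pr_def)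
  then show "\<bar>real (Jcount X N) - real (primepi N) * real (card X)\<bar> \<le> 20 * real (card X) ^ 2 * M / ln M"
  proof -
    have "real (card X) ^ 2 * B = 20 * real (card X) ^ 2 * M / ln M" by (simp add: B_def)
    then show ?thesis using cO \<open>real (Jcount X N) - real (primepi N) * real (card X) = real (card Off)\<close> by simp
  qed
qed

end
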